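(* Let $d\ge2$ be an integer and let $\gamma_1=\{-1+\frac{\sin(\phi(d-1))}{\sin(\phi d)}e^{i\phi}:\phi\in[0,\pi/d)\}$ (the point at $\phi=0$ being $-1/d$). For every $v\in\gamma_1\setminus\{-1/d\}$, the solutions $u$ of $R(u,v)=u(1+u)^{d-1}-v(1+v)^{d-1}=0$ are simple zeros of $u\mapsto R(u,v)$. *)

theory Defs
  imports "HOL-Analysis.Analysis"
begin

definition R :: "nat \<Rightarrow> complex \<Rightarrow> complex \<Rightarrow> complex" where
  "R d u v = u * (1 + u) ^ (d - 1) - v * (1 + v) ^ (d - 1)"

definition gamma1 :: "nat \<Rightarrow> complex set" where
  "gamma1 d = {(if \<phi> = 0 then - 1 / of_nat d
                else -1 + complex_of_real (sin (\<phi> * (real d - 1)) / sin (\<phi> * real d)) * cis \<phi>)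
               | \<phi>. 0 \<le> \<phi> \<and> \<phi> < pi / real d}"

end

theory Submission imports Defs begin

lemma sin_lim: "((\<lambda>x. sin (x * k) / x) \<longlongrightarrow> (k::real)) (at 0)"
proof -
  have "((\<lambda>x. sin (x * k)) has_field_derivative (cos (0 * k) * k)) (at 0)"
    by (auto intro!: derivative_eq_intros)
  then show ?thesis by (simp add: has_field_derivative_iff)
qed

lemma lnsin_deriv:
  fixes k x :: real
  assumes "sin (x*k) > 0"
  shows "((\<lambda>z. ln (sin (z*k))) has_real_derivative (cos (x*k) * k / sin (x*k))) (at x)"
proof -
  have "((\<lambda>z. sin (z*k)) has_real_derivative (cos (x*k) * k)) (at x)"
    by (auto intro!: derivative_eq_intros)
  from DERIV_chain2[OF DERIV_ln_divide[OF assms] this] show ?thesis by simp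
qed

lemma alg_id:
  fixes a b S p q C m :: real
  assumes "a > 0" "b > 0" "S > 0" "S = a*p + q*b" "C = q*p - a*b"
  shows "(m * (q * m / a) + p / b - (m+1) * (C * (m+1) / S)) * (a*b*S) = (m*q*b - a*p)^2 + (m+1)^2*a^2*b^2"
proof -
  have "(m * (q * m / a) + p / b - (m+1) * (C * (m+1) / S)) * (a*b*S) = m^2*q*b*S + p*a*S - (m+1)^2*C*a*b"
    using assms(1-3) by (simp add: field_simps power2_eq_square)
  also have "\<dots> = (m*q*b - a*p)^2 + (m+1)^2*a^2*b^2"
    unfolding assms(4,5) by (simp add: algebra_simps power2_eq_square)
  finally show ?thesis .
qed

lemma sin_pos3:
  fixes m x :: real
  assumes "m \<ge> 1" "0 < x" "x * (m+1) < pi"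
  shows "sin (x*m) > 0" "sin x > 0" "sin (x*(m+1)) > 0"
proof -
  have e: "x*(m+1) = x*m + x" by algebra
  have p: "x*m > 0" using assms by simp
  have x2: "x*m < pi" using assms e by linarith
  have x3: "x < pi" using assms p e by linarith
  show "sin (x*m) > 0" by (rule sin_gt_zero) (use p x2 in auto)
  show "sin x > 0" by (rule sin_gt_zero) (use assms x3 in auto)
  show "sin (x*(m+1)) > 0" by (rule sin_gt_zero) (use assms p in auto)
qed

lemma hh_deriv:
  fixes m x :: real
  assumes m1: "m \<ge> 1" and x: "0 < x" "x * (m+1) < pi"
  shows "\<exists>y. DERIV (\<lambda>x. m * ln (sin (x*m)) + ln (sin x) - (m+1) * ln (sin (x*(m+1)))) x :> y \<and> y > 0"
proof -
  note pos = sin_pos3[OF assms]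
  have a: "sin (x*m) > 0" and b: "sin x > 0" and S: "sin (x*(m+1)) > 0" using pos by auto
  define D where "D = m * (cos (x*m) * m / sin (x*m)) + cos x / sin x - (m+1) * (cos (x*(m+1)) * (m+1) / sin (x*(m+1)))"
  have b': "sin (x*1) > 0" using b by simp
  have "DERIV (\<lambda>x. m * ln (sin (x*m)) + ln (sin x) - (m+1) * ln (sin (x*(m+1)))) x :> D"
    unfolding D_def
    using DERIV_diff[OF DERIV_add[OF DERIV_cmult[OF lnsin_deriv[OF a], of m] lnsin_deriv[OF b']] DERIV_cmult[OF lnsin_deriv[OF S], of "m+1"]]
    by simp
  moreover have "D > 0"
  proof -
    let ?a = "sin (x*m)" and ?b = "sin x" and ?p = "cos x" and ?q = "cos (x*m)"
    have SS: "sin (x*(m+1)) = ?a * ?p + ?q * ?b" by (simp add: distrib_left sin_add)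
    have CC: "cos (x*(m+1)) = ?q * ?p - ?a * ?b" by (simp add: distrib_left cos_add)
    have "D * (?a * ?b * sin (x*(m+1))) = (m * ?q * ?b - ?a * ?p)^2 + (m+1)^2 * ?a^2 * ?b^2"
      unfolding D_def by (rule alg_id[OF a b S SS CC])
    also have "\<dots> > 0" using a b m1 by (simp add: add_nonneg_pos)
    finally show ?thesis by (rule zero_less_mult_pos2) (use a b S in simp)
  qed
  ultimately show ?thesis by blast
qed

lemma key:
  fixes m x :: real and n :: nat
  assumes m1: "m \<ge> 1" and mn: "m = real n" and x: "0 < x" "x * (m+1) < pi"
  shows "sin (x*m)^n * sin x / sin (x*(m+1))^(n+1) > m^n / (m+1)^(n+1)"
proof -
  define h where "h = (\<lambda>x. m * ln (sin (x*m)) + ln (sin x) - (m+1) * ln (sin (x*(m+1))))"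
  define G where "G = (\<lambda>x. sin (x*m)^n * sin x / sin (x*(m+1))^(n+1))"
  define L where "L = m^n / (m+1)^(n+1)"
  have Lpos: "L > 0" unfolding L_def using m1 by simp
  have hG: "h y = ln (G y)" if "0 < y" "y * (m+1) < pi" for y
  proof -
    note pos = sin_pos3[OF m1 that]
    show ?thesis unfolding h_def G_def using pos mn
      by (simp add: ln_mult ln_div ln_realpow algebra_simps)
  qed
  have mono: "h y < h z" if "0 < y" "y < z" "z * (m+1) < pi" for y z
  proof (rule DERIV_pos_imp_increasing[OF that(2)])
    fix t assume "y \<le> t" "t \<le> z"
    then have "0 < t" "t * (m+1) < pi" using that m1
      by (auto intro: le_less_trans[OF mult_right_mono[of t z]])
    then show "\<exists>y. DERIV h t :> y \<and> y > 0" unfolding h_def using hh_deriv[OF m1] by blast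
  qed
  have limG: "(G \<longlongrightarrow> m^n * 1 / (m+1)^(n+1)) (at 0)"
  proof -
    have "((\<lambda>x. (sin (x*m)/x)^n * (sin (x*1)/x) / (sin (x*(m+1))/x)^(n+1)) \<longlongrightarrow> m^n * 1 / (m+1)^(n+1)) (at 0)"
      by (intro tendsto_intros sin_lim) (use m1 in simp)
    then show ?thesis
    proof (rule Lim_transform_eventually)
      show "\<forall>\<^sub>F x in at 0. (sin (x*m)/x)^n * (sin (x*1)/x) / (sin (x*(m+1))/x)^(n+1) = G x"
        unfolding G_def eventually_at_filter
        by (auto simp: power_divide field_simps)
    qed
  qed
  have limh: "(h \<longlongrightarrow> ln L) (at_right 0)"
  proof -
    have "(G \<longlongrightarrow> L) (at_right 0)"
      using tendsto_mono[OF at_le[of "{0<..}" UNIV 0] limG] unfolding L_def by simp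
    then have "((\<lambda>x. ln (G x)) \<longlongrightarrow> ln L) (at_right 0)" using Lpos by (intro tendsto_ln) auto
    then show ?thesis
    proof (rule Lim_transform_eventually)
      have "pi / (m+1) > 0" using m1 by simp
      then show "\<forall>\<^sub>F y in at_right 0. ln (G y) = h y"
        unfolding eventually_at_right_field
        by (intro exI[of _ "pi/(m+1)"]) (use m1 hG in \<open>auto simp: field_simps\<close>)
    qed
  qed
  have hx2: "h (x/2) < h x" using mono[of "x/2" x] x by simp
  have "ln L \<le> h (x/2)"
  proof (rule tendsto_le[OF _ tendsto_const limh])
    show "at_right (0::real) \<noteq> bot" by simp
    have x2: "x/2 * (m+1) < pi" using x m1 pi_gt_zero by (simp add: field_simps; linarith)
    show "\<forall>\<^sub>F y in at_right 0. h y \<le> h (x/2)"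
      unfolding eventually_at_right_field
      by (intro exI[of _ "x/2"]) (use x mono[OF _ _ x2] in \<open>auto intro: less_imp_le\<close>)
  qed
  then have "ln L < ln (G x)" using hx2 hG[OF x] by simp
  then have "L < G x" using Lpos by (subst (asm) ln_less_cancel_iff) (use sin_pos3[OF m1 x] in \<open>auto simp: G_def\<close>)
  then show ?thesis unfolding L_def G_def .
qed

lemma fv_eq:
  fixes n :: nat and phi a b S r :: real and v :: complex
  assumes a: "a = sin (phi * real n)" and b: "b = sin phi" and S: "S = sin (phi * (real n + 1))"
    and Spos: "S > 0" and r: "r = a / S" and v: "v = -1 + complex_of_real r * cis phi"
  shows "v * (1 + v) ^ n = complex_of_real (- (a ^ n * b / S ^ (n + 1)))"
proof -
  have 1: "1 + v = complex_of_real r * cis phi" using v by simp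
  have p: "(1 + v) ^ n = complex_of_real (r ^ n) * cis (real n * phi)"
    unfolding 1 power_mult_distrib Complex.DeMoivre by simp
  have w: "v * cis (real n * phi) = complex_of_real (- b / S)"
  proof -
    have "v * cis (real n * phi) = complex_of_real r * cis (phi * (real n + 1)) - cis (phi * real n)"
      unfolding v by (simp add: algebra_simps cis_mult)
    also have "\<dots> = complex_of_real (- b / S)"
    proof (rule complex_eqI)
      have "r * sin (phi * (real n + 1)) - sin (phi * real n) = 0"
        using Spos unfolding r a S by simp
      then show "Im (complex_of_real r * cis (phi * (real n + 1)) - cis (phi * real n)) = Im (complex_of_real (- b / S))"
        by simp
      have sd: "sin (phi * real n) * cos (phi * (real n + 1)) - cos (phi * real n) * sin (phi * (real n + 1)) = - sin phi"
        using sin_diff[of "phi * real n" "phi * (real n + 1)"] by (simp add: algebra_simps)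
      have "r * cos (phi * (real n + 1)) - cos (phi * real n) =
          (sin (phi * real n) * cos (phi * (real n + 1)) - cos (phi * real n) * sin (phi * (real n + 1))) / S"
        using Spos unfolding r a S by (simp add: field_simps)
      also have "\<dots> = - b / S" using sd unfolding b S by simp
      finally have "r * cos (phi * (real n + 1)) - cos (phi * real n) = - b / S" .
      then show "Re (complex_of_real r * cis (phi * (real n + 1)) - cis (phi * real n)) = Re (complex_of_real (- b / S))"
        by simp
    qed
    finally show ?thesis .
  qed
  have "v * (1 + v) ^ n = complex_of_real (r ^ n) * (v * cis (real n * phi))"
    unfolding p by (simp add: algebra_simps)
  also have "\<dots> = complex_of_real (r ^ n * (- b / S))" unfolding w by simp
  also have "r ^ n * (- b / S) = - (a ^ n * b / S ^ (n + 1))"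
    unfolding r by (simp add: power_divide)
  finally show ?thesis .
qed

theorem lemma5p7:
  fixes d :: nat and v u :: complex
  assumes "d \<ge> 2"
    and "v \<in> gamma1 d - {- 1 / of_nat d}"
    and "R d u v = 0"
  shows "deriv (\<lambda>w. R d w v) u \<noteq> 0"
proof
  assume D0: "deriv (\<lambda>w. R d w v) u = 0"
  obtain k where dk: "d = Suc (Suc k)" using assms(1) by (metis add_2_eq_Suc le_Suc_ex)
  obtain phi where ph: "0 \<le> phi" "phi < pi / real d"
    and vdef: "v = (if phi = 0 then - 1 / of_nat d
                else -1 + complex_of_real (sin (phi * (real d - 1)) / sin (phi * real d)) * cis phi)"
    using assms(2) unfolding gamma1_def by blast
  have "phi \<noteq> 0" using vdef assms(2) by auto
  then have ph0: "phi > 0" using ph by simp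
  define m where "m = real (Suc k)"
  have m1: "m \<ge> 1" unfolding m_def by simp
  have dm: "real d = m + 1" "real d - 1 = m" unfolding m_def dk by simp_all
  have "phi < pi / (m + 1)" using ph(2) dm by simp
  then have phm: "phi * (m + 1) < pi" using m1 by (simp add: less_divide_eq)
  note pos = sin_pos3[OF m1 ph0 phm]
  define a where "a = sin (phi * real (Suc k))"
  define b where "b = sin phi"
  define S where "S = sin (phi * (real (Suc k) + 1))"
  define r where "r = a / S"
  have Spos: "S > 0" using pos unfolding S_def m_def by simp
  have apos: "a > 0" using pos unfolding a_def m_def by simp
  have bpos: "b > 0" using pos unfolding b_def by simp
  have v: "v = -1 + complex_of_real r * cis phi"
    using vdef ph0 unfolding r_def a_def S_def dm m_def by simp
  have fv: "v * (1 + v) ^ Suc k = complex_of_real (- (a ^ Suc k * b / S ^ (Suc k + 1)))"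
    by (rule fv_eq[OF a_def b_def S_def Spos r_def v])
  have Imv: "Im v > 0" using v apos Spos bpos unfolding r_def b_def by simp
  have Rdef: "\<And>w. R d w v = w * (1 + w) ^ Suc k - v * (1 + v) ^ Suc k"
    unfolding R_def dk by simp
  have "((\<lambda>w. R d w v) has_field_derivative ((1 + u) ^ k * (1 + of_nat (Suc (Suc k)) * u))) (at u)"
  proof -
    have "((\<lambda>w. w * (1 + w) ^ Suc k - v * (1 + v) ^ Suc k) has_field_derivative
        ((1 + u) ^ k * (1 + of_nat (Suc (Suc k)) * u))) (at u)"
      by (rule derivative_eq_intros refl)+ (simp add: algebra_simps)
    then show ?thesis unfolding Rdef by simp
  qed
  then have "deriv (\<lambda>w. R d w v) u = (1 + u) ^ k * (1 + of_nat (Suc (Suc k)) * u)"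
    by (rule DERIV_imp_deriv)
  with D0 have "(1 + u) ^ k = 0 \<or> 1 + of_nat (Suc (Suc k)) * u = 0" by simp
  then show False
  proof
    assume "(1 + u) ^ k = 0"
    then have "1 + u = 0" by simp
    then have "u * (1 + u) ^ Suc k = 0" by simp
    with assms(3) have "v * (1 + v) ^ Suc k = 0" unfolding Rdef by simp
    then have "v = 0 \<or> 1 + v = 0" by (simp; blast)
    then show False using Imv by (auto simp: add_eq_0_iff)
  next
    assume "1 + of_nat (Suc (Suc k)) * u = 0"
    then have e1: "of_nat (Suc (Suc k)) * u = -1" by (simp add: eq_neg_iff_add_eq_0 add.commute)
    have nz: "(of_nat (Suc (Suc k)) :: complex) \<noteq> 0" by (rule of_nat_neq_0)
    have e2: "(of_nat (Suc (Suc k)) :: complex) = complex_of_real (m + 1)" unfolding m_def by simp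
    have u: "u = - 1 / complex_of_real (m + 1)" unfolding e2[symmetric]
      using e1 nz by (metis minus_divide_left nonzero_mult_div_cancel_left)
    have "u * (1 + u) ^ Suc k = complex_of_real (- (m ^ Suc k / (m + 1) ^ (Suc k + 1)))"
    proof -
      have "complex_of_real (m + 1) \<noteq> 0" using m1 by (simp only: of_real_eq_0_iff)
      then have nz3: "1 + complex_of_real m \<noteq> 0" by (simp add: add.commute)
      have "1 + u = complex_of_real (m / (m + 1))" unfolding u using nz3
        by (simp add: field_simps)
      then have h1: "1 + u = complex_of_real (m / (m + 1))" .
      have u': "u = complex_of_real (-1 / (m + 1))" unfolding u by simp
      have "u * (1 + u) ^ Suc k = complex_of_real (-1 / (m + 1)) * complex_of_real (m / (m + 1)) ^ Suc k"
        by (simp only: h1 u'[symmetric])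
      also have "\<dots> = complex_of_real (-1 / (m + 1) * (m / (m + 1)) ^ Suc k)" by simp
      also have "-1 / (m + 1) * (m / (m + 1)) ^ Suc k = - (m ^ Suc k / (m + 1) ^ (Suc k + 1))"
        by (simp add: power_divide)
      finally show ?thesis .
    qed
    with assms(3) fv have "- (m ^ Suc k / (m + 1) ^ (Suc k + 1)) = - (a ^ Suc k * b / S ^ (Suc k + 1))"
      unfolding Rdef by (metis eq_iff_diff_eq_0 of_real_eq_iff)
    moreover have "a ^ Suc k * b / S ^ (Suc k + 1) > m ^ Suc k / (m + 1) ^ (Suc k + 1)"
      using key[OF m1 m_def ph0 phm] unfolding a_def b_def S_def m_def by simp
    ultimately show False by simp
  qed
qed

end
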